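(* For any term $t$, any basis term $b$, any type $T$, any unit types $\vec U=U_1,\dots,U_n$ and any context $\Gamma$ of the Scalar type system: (1) if $\Gamma\vdash t:T$ then $\Gamma[\vec U/\vec X]\vdash t:T[\vec U/\vec X]$; (2) if $\Gamma,x:U\vdash t:T$ and $\Gamma\vdash b:U$ then $\Gamma\vdash t[b/x]:T$.
   Context: Fix a commutative ring $(\mathcal{S},+,\times)$. Terms: $t,r ::= b \mid (t)\,r \mid \mathbf{0} \mid \alpha.t \mid t+r$, basis terms $b ::= x \mid \lambda x\,t$, modulo associativity and commutativity of $+$; $t[b/x]$ is capture-avoiding substitution with $(\alpha.t+\beta.u)[b/x]=\alpha.(t[b/x])+\beta.(u[b/x])$. Types: $T ::= U \mid \forall X.T \mid \alpha.T \mid \overline{0}$; unit types: $U ::= X \mid U\to T \mid \forall X.U$. Type variables are only substituted by unit types; $U[\vec V/\vec X]$ means $U[V_1/X_1]\cdots[V_n/X_n]$, $(\alpha.T)[U/X]=\alpha.T[U/X]$, and $\Gamma[\vec U/\vec X]$ applies the substitution to every type of $\Gamma$. Type equivalence $\equiv$ is the least congruence with $\alpha.\overline0\equiv\overline0$, $0.T\equiv\overline0$, $1.T\equiv T$, $\alpha.(\beta.T)\equiv(\alpha\times\beta).T$, $\forall X.\alpha.T\equiv\alpha.\forall X.T$. A context is a set of distinct term variables with unit types. Typing rules: (ax) $\Gamma,x:U\vdash x:U$; ($\equiv$) from $\Gamma\vdash t:T$ and $T\equiv S$ infer $\Gamma\vdash t:S$; ($\to_E$) from $\Gamma\vdash t:\alpha.(U\to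 T)$ and $\Gamma\vdash r:\beta.U$ infer $\Gamma\vdash (t)\,r:(\alpha\times\beta).T$; ($\to_I$) from $\Gamma,x:U\vdash t:T$ infer $\Gamma\vdash\lambda x\,t:U\to T$; ($\forall_E$) from $\Gamma\vdash t:\forall X.T$ infer $\Gamma\vdash t:T[U/X]$, $U$ unit; ($\forall_I$) from $\Gamma\vdash t:T$ with $X$ not free in $\Gamma$ infer $\Gamma\vdash t:\forall X.T$; ($ax_{\overline0}$) $\Gamma\vdash\mathbf 0:\overline0$; ($+_I$) from $\Gamma\vdash t:\alpha.T$ and $\Gamma\vdash r:\beta.T$ infer $\Gamma\vdash t+r:(\alpha+\beta).T$; ($s_I$) from $\Gamma\vdash t:T$ infer $\Gamma\vdash\alpha.t:\alpha.T$. *)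

theory Defs
  imports Main
begin

type_synonym var = nat
type_synonym tvar = nat

text \<open>Terms over a scalar type 'a (a commutative ring):
  t ::= x | lambda x t | (t) r | 0 | alpha.t | t + r.  App t r is the application (t) r.\<close>
datatype 'a trm =
    Var var
  | Lam var "'a trm"
  | App "'a trm" "'a trm"
  | Zero
  | Scal 'a "'a trm"
  | Plus "'a trm" "'a trm"

fun basis :: "'a trm \<Rightarrow> bool" where
  "basis (Var x) = True"
| "basis (Lam x t) = True"
| "basis _ = False"

definition swp :: "nat \<Rightarrow> nat \<Rightarrow> nat \<Rightarrow> nat" where
  "swp a c z = (if z = a then c else if z = c then a else z)"

fun tm_swap :: "var \<Rightarrow> var \<Rightarrow> 'a trm \<Rightarrow> 'a trm" where
  "tm_swap a c (Var z) = Var (swp a c z)"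
| "tm_swap a c (Lam z t) = Lam (swp a c z) (tm_swap a c t)"
| "tm_swap a c (App t r) = App (tm_swap a c t) (tm_swap a c r)"
| "tm_swap a c Zero = Zero"
| "tm_swap a c (Scal \<alpha> t) = Scal \<alpha> (tm_swap a c t)"
| "tm_swap a c (Plus t r) = Plus (tm_swap a c t) (tm_swap a c r)"

lemma size_tm_swap [simp]: "size (tm_swap a c t) = size t"
  by (induction t) auto

fun fv :: "'a trm \<Rightarrow> var set" where
  "fv (Var x) = {x}"
| "fv (Lam x t) = fv t - {x}"
| "fv (App t r) = fv t \<union> fv r"
| "fv Zero = {}"
| "fv (Scal \<alpha> t) = fv t"
| "fv (Plus t r) = fv t \<union> fv r"

text \<open>A name not in a (finite) set of names.\<close>
definition fresh :: "nat set \<Rightarrow> nat" where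
  "fresh S = Suc (Max (insert 0 S))"

function subst :: "'a trm \<Rightarrow> 'a trm \<Rightarrow> var \<Rightarrow> 'a trm" where
  "subst (Var y) b x = (if y = x then b else Var y)"
| "subst (Lam y t) b x =
     (if y = x then Lam y t
      else if y \<in> fv b then
        (let z = fresh (fv b \<union> fv t \<union> {x, y}) in Lam z (subst (tm_swap y z t) b x))
      else Lam y (subst t b x))"
| "subst (App t r) b x = App (subst t b x) (subst r b x)"
| "subst Zero b x = Zero"
| "subst (Scal \<alpha> t) b x = Scal \<alpha> (subst t b x)"
| "subst (Plus t r) b x = Plus (subst t b x) (subst r b x)"
  by pat_completeness auto
termination
  by (relation "measure (\<lambda>(t, b, x). size t)") auto

text \<open>Raw types T ::= X | A -> B | forall X. T | alpha.T | 0bar; well-formedness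
  (unit types vs. general types) is given by the predicates below.\<close>
datatype 'a ty =
    TVar tvar
  | Arr "'a ty" "'a ty"
  | All tvar "'a ty"
  | SMul 'a "'a ty"
  | TZero

fun unit_ty :: "'a ty \<Rightarrow> bool" and is_ty :: "'a ty \<Rightarrow> bool" where
  "unit_ty (TVar X) = True"
| "unit_ty (Arr U T) = (unit_ty U \<and> is_ty T)"
| "unit_ty (All X U) = unit_ty U"
| "unit_ty (SMul \<alpha> T) = False"
| "unit_ty TZero = False"
| "is_ty (TVar X) = True"
| "is_ty (Arr U T) = (unit_ty U \<and> is_ty T)"
| "is_ty (All X T) = is_ty T"
| "is_ty (SMul \<alpha> T) = is_ty T"
| "is_ty TZero = True"

fun ty_swap :: "tvar \<Rightarrow> tvar \<Rightarrow> 'a ty \<Rightarrow> 'a ty" where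
  "ty_swap a c (TVar Z) = TVar (swp a c Z)"
| "ty_swap a c (Arr U T) = Arr (ty_swap a c U) (ty_swap a c T)"
| "ty_swap a c (All Z T) = All (swp a c Z) (ty_swap a c T)"
| "ty_swap a c (SMul \<alpha> T) = SMul \<alpha> (ty_swap a c T)"
| "ty_swap a c TZero = TZero"

lemma size_ty_swap [simp]: "size (ty_swap a c T) = size T"
  by (induction T) auto

fun ftv :: "'a ty \<Rightarrow> tvar set" where
  "ftv (TVar X) = {X}"
| "ftv (Arr U T) = ftv U \<union> ftv T"
| "ftv (All X T) = ftv T - {X}"
| "ftv (SMul \<alpha> T) = ftv T"
| "ftv TZero = {}"

function tsubst :: "'a ty \<Rightarrow> 'a ty \<Rightarrow> tvar \<Rightarrow> 'a ty" where
  "tsubst (TVar Y) U X = (if Y = X then U else TVar Y)"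
| "tsubst (Arr A B) U X = Arr (tsubst A U X) (tsubst B U X)"
| "tsubst (All Y T) U X =
     (if Y = X then All Y T
      else if Y \<in> ftv U then
        (let Z = fresh (ftv U \<union> ftv T \<union> {X, Y}) in All Z (tsubst (ty_swap Y Z T) U X))
      else All Y (tsubst T U X))"
| "tsubst (SMul \<alpha> T) U X = SMul \<alpha> (tsubst T U X)"
| "tsubst TZero U X = TZero"
  by pat_completeness auto
termination
  by (relation "measure (\<lambda>(T, U, X). size T)") auto

definition tsubsts :: "'a ty \<Rightarrow> 'a ty list \<Rightarrow> tvar list \<Rightarrow> 'a ty" where
  "tsubsts T Us Xs = fold (\<lambda>(U, X) S. tsubst S U X) (zip Us Xs) T"

text \<open>Contexts: finite partial maps from term variables to unit types.\<close>
type_synonym 'a ctx = "var \<Rightarrow> 'a ty option"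

definition ctx_ok :: "'a ctx \<Rightarrow> bool" where
  "ctx_ok \<Gamma> \<longleftrightarrow> finite (dom \<Gamma>) \<and> (\<forall>V \<in> ran \<Gamma>. unit_ty V)"

definition ctx_subst :: "'a ctx \<Rightarrow> 'a ty list \<Rightarrow> tvar list \<Rightarrow> 'a ctx" where
  "ctx_subst \<Gamma> Us Xs = (\<lambda>x. map_option (\<lambda>V. tsubsts V Us Xs) (\<Gamma> x))"

definition ftv_ctx :: "'a ctx \<Rightarrow> tvar set" where
  "ftv_ctx \<Gamma> = \<Union> (ftv ` ran \<Gamma>)"

text \<open>Least congruence (on well-formed types, which are taken modulo alpha-conversion of
  bound type variables) containing the five axioms.\<close>
inductive teq :: "('a::comm_ring_1) ty \<Rightarrow> 'a ty \<Rightarrow> bool" where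
  teq_refl: "is_ty T \<Longrightarrow> teq T T"
| teq_sym: "teq T S \<Longrightarrow> teq S T"
| teq_trans: "teq T S \<Longrightarrow> teq S R \<Longrightarrow> teq T R"
| teq_smul_zero: "teq (SMul \<alpha> TZero) TZero"
| teq_zero_smul: "is_ty T \<Longrightarrow> teq (SMul 0 T) TZero"
| teq_one_smul: "is_ty T \<Longrightarrow> teq (SMul 1 T) T"
| teq_smul_smul: "is_ty T \<Longrightarrow> teq (SMul \<alpha> (SMul \<beta> T)) (SMul (\<alpha> * \<beta>) T)"
| teq_all_smul: "is_ty T \<Longrightarrow> teq (All X (SMul \<alpha> T)) (SMul \<alpha> (All X T))"
| teq_alpha: "is_ty T \<Longrightarrow> Y \<notin> ftv (All X T) \<Longrightarrow> teq (All X T) (All Y (tsubst T (TVar Y) X))"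
| teq_arr: "teq U U' \<Longrightarrow> unit_ty U \<Longrightarrow> unit_ty U' \<Longrightarrow> teq T T' \<Longrightarrow> teq (Arr U T) (Arr U' T')"
| teq_all: "teq T T' \<Longrightarrow> teq (All X T) (All X T')"
| teq_smul: "teq T T' \<Longrightarrow> teq (SMul \<alpha> T) (SMul \<alpha> T')"

inductive has_type :: "('a::comm_ring_1) ctx \<Rightarrow> 'a trm \<Rightarrow> 'a ty \<Rightarrow> bool" where
  ax: "\<Gamma> x = Some U \<Longrightarrow> has_type \<Gamma> (Var x) U"
| equiv: "has_type \<Gamma> t T \<Longrightarrow> teq T S \<Longrightarrow> has_type \<Gamma> t S"
| arrE: "has_type \<Gamma> t (SMul \<alpha> (Arr U T)) \<Longrightarrow> has_type \<Gamma> r (SMul \<beta> U) \<Longrightarrow>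
           has_type \<Gamma> (App t r) (SMul (\<alpha> * \<beta>) T)"
| arrI: "unit_ty U \<Longrightarrow> has_type (\<Gamma>(x \<mapsto> U)) t T \<Longrightarrow> has_type \<Gamma> (Lam x t) (Arr U T)"
| allE: "has_type \<Gamma> t (All X T) \<Longrightarrow> unit_ty U \<Longrightarrow> has_type \<Gamma> t (tsubst T U X)"
| allI: "has_type \<Gamma> t T \<Longrightarrow> X \<notin> ftv_ctx \<Gamma> \<Longrightarrow> has_type \<Gamma> t (All X T)"
| axZero: "has_type \<Gamma> Zero TZero"
| plusI: "has_type \<Gamma> t (SMul \<alpha> T) \<Longrightarrow> has_type \<Gamma> r (SMul \<beta> T) \<Longrightarrow>
           has_type \<Gamma> (Plus t r) (SMul (\<alpha> + \<beta>) T)"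
| sI: "has_type \<Gamma> t T \<Longrightarrow> has_type \<Gamma> (Scal \<alpha> t) (SMul \<alpha> T)"

end

theory Submission
  imports Defs
begin

datatype 'a dty = DF nat | DB nat | DArr "'a dty" "'a dty" | DAll "'a dty" | DSM 'a "'a dty" | DZ

fun cl :: "nat \<Rightarrow> nat \<Rightarrow> 'a dty \<Rightarrow> 'a dty" where
  "cl k X (DF Y) = (if Y = X then DB k else DF Y)"
| "cl k X (DB i) = DB i"
| "cl k X (DArr a b) = DArr (cl k X a) (cl k X b)"
| "cl k X (DAll a) = DAll (cl (Suc k) X a)"
| "cl k X (DSM c a) = DSM c (cl k X a)"
| "cl k X DZ = DZ"

fun ds :: "'a dty \<Rightarrow> 'a dty \<Rightarrow> nat \<Rightarrow> 'a dty" where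
  "ds (DF Y) u X = (if Y = X then u else DF Y)"
| "ds (DB i) u X = DB i"
| "ds (DArr a b) u X = DArr (ds a u X) (ds b u X)"
| "ds (DAll a) u X = DAll (ds a u X)"
| "ds (DSM c a) u X = DSM c (ds a u X)"
| "ds DZ u X = DZ"

fun dfv :: "'a dty \<Rightarrow> nat set" where
  "dfv (DF Y) = {Y}"
| "dfv (DB i) = {}"
| "dfv (DArr a b) = dfv a \<union> dfv b"
| "dfv (DAll a) = dfv a"
| "dfv (DSM c a) = dfv a"
| "dfv DZ = {}"

fun dsw :: "nat \<Rightarrow> nat \<Rightarrow> 'a dty \<Rightarrow> 'a dty" where
  "dsw p q (DF Y) = DF (swp p q Y)"
| "dsw p q (DB i) = DB i"
| "dsw p q (DArr a b) = DArr (dsw p q a) (dsw p q b)"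
| "dsw p q (DAll a) = DAll (dsw p q a)"
| "dsw p q (DSM c a) = DSM c (dsw p q a)"
| "dsw p q DZ = DZ"

fun bnd :: "nat \<Rightarrow> 'a dty \<Rightarrow> bool" where
  "bnd k (DF Y) = True"
| "bnd k (DB i) = (i < k)"
| "bnd k (DArr a b) = (bnd k a \<and> bnd k b)"
| "bnd k (DAll a) = bnd (Suc k) a"
| "bnd k (DSM c a) = bnd k a"
| "bnd k DZ = True"

fun nf :: "'a ty \<Rightarrow> 'a dty" where
  "nf (TVar X) = DF X"
| "nf (Arr A B) = DArr (nf A) (nf B)"
| "nf (All X T) = DAll (cl 0 X (nf T))"
| "nf (SMul c T) = DSM c (nf T)"
| "nf TZero = DZ"

lemma dfv_cl[simp]: "dfv (cl k X d) = dfv d - {X}"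
  by (induction d arbitrary: k) auto

lemma dfv_nf[simp]: "dfv (nf T) = ftv T"
  by (induction T) auto

lemma swp_swp[simp]: "swp p q (swp p q x) = x"
  by (auto simp: swp_def)

lemma swp_inj[simp]: "(swp p q x = swp p q y) = (x = y)"
  by (auto simp: swp_def)

lemma cl_dsw: "cl k (swp p q X) (dsw p q d) = dsw p q (cl k X d)"
  by (induction d arbitrary: k) auto

lemma nf_swap: "nf (ty_swap p q T) = dsw p q (nf T)"
  by (induction T) (auto simp: cl_dsw)

lemma cl_dsw_fresh: "Z \<notin> dfv d \<Longrightarrow> cl k Z (dsw Y Z d) = cl k Y d"
  by (induction d arbitrary: k) (auto simp: swp_def)

lemma cl_triv: "Z \<notin> dfv u \<Longrightarrow> cl k Z u = u"
  by (induction u arbitrary: k) auto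

lemma cl_ds: "Z \<notin> dfv u \<Longrightarrow> Z \<noteq> X \<Longrightarrow> cl k Z (ds d u X) = ds (cl k Z d) u X"
  by (induction d arbitrary: k) (auto simp: cl_triv)

lemma ds_triv: "X \<notin> dfv d \<Longrightarrow> ds d u X = d"
  by (induction d) auto

lemma cl_ds_var: "Z \<notin> dfv d \<Longrightarrow> cl k Z (ds d (DF Z) Y) = cl k Y d"
  by (induction d arbitrary: k) auto

lemma ds_same[simp]: "ds d (DF X) X = d"
  by (induction d) auto

lemma finite_ftv[simp]: "finite (ftv T)"
  by (induction T) auto

lemma fresh_notin: "finite S \<Longrightarrow> fresh S \<notin> S"
proof
  assume f: "finite S" and m: "fresh S \<in> S"
  have "fresh S \<le> Max (insert 0 S)" using f m by (intro Max_ge) auto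
  thus False by (simp add: fresh_def)
qed

lemma nf_tsubst: "nf (tsubst T U X) = ds (nf T) (nf U) X"
proof (induction T U X rule: tsubst.induct)
  case (3 Y T U X)
  show ?case
  proof (cases "Y = X")
    case True thus ?thesis by (simp add: ds_triv)
  next
    case False
    show ?thesis
    proof (cases "Y \<in> ftv U")
      case True
      define Z where "Z = fresh (ftv U \<union> ftv T \<union> {X, Y})"
      have "Z \<notin> ftv U \<union> ftv T \<union> {X, Y}" unfolding Z_def by (rule fresh_notin) simp
      hence zz: "Z \<noteq> X" "Z \<noteq> Y" "Z \<notin> ftv U" "Z \<notin> ftv T" by auto
      have e: "tsubst (All Y T) U X = All Z (tsubst (ty_swap Y Z T) U X)"
        using False True by (simp add: Let_def Z_def)
      have ih: "nf (tsubst (ty_swap Y Z T) U X) = ds (dsw Y Z (nf T)) (nf U) X"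
        using 3(1)[OF False True Z_def] by (simp add: nf_swap)
      show ?thesis unfolding e using zz
        by (simp add: ih cl_ds cl_dsw_fresh)
    next
      case f2: False
      then show ?thesis using 3 False by (simp add: cl_ds)
    qed
  qed
qed auto

lemma bnd_mono: "bnd k d \<Longrightarrow> k \<le> k' \<Longrightarrow> bnd k' d"
  by (induction d arbitrary: k k') auto

lemma bnd_cl: "bnd k d \<Longrightarrow> bnd (Suc k) (cl k X d)"
  by (induction d arbitrary: k) auto

lemma bnd_nf: "bnd 0 (nf T)"
  by (induction T) (auto intro: bnd_cl)

lemma bnd_ds: "bnd k d \<Longrightarrow> bnd 0 u \<Longrightarrow> bnd k (ds d u X)"
  by (induction d arbitrary: k) (auto intro: bnd_mono)

lemma cl_inj: "bnd k e1 \<Longrightarrow> bnd k e2 \<Longrightarrow> cl k W e1 = cl k W e2 \<Longrightarrow> e1 = e2"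
proof (induction e1 arbitrary: k e2)
  case (DF x) thus ?case by (cases e2) (auto split: if_splits)
next
  case (DB x) thus ?case by (cases e2) (auto split: if_splits)
next
  case (DArr e11 e12) thus ?case by (cases e2) (auto split: if_splits)
next
  case (DAll e) thus ?case by (cases e2) (auto split: if_splits)
next
  case (DSM c e) thus ?case by (cases e2) (auto split: if_splits)
next
  case DZ thus ?case by (cases e2) (auto split: if_splits)
qed

lemma size_tsubst_var: "size (tsubst T (TVar W) X) = size T"
  by (induction T "TVar W :: 'a ty" X rule: tsubst.induct) (auto simp: Let_def)

lemma unit_is_ty: "unit_ty U \<Longrightarrow> is_ty U"
  by (induction U) auto

lemma swap_wf: "(unit_ty T \<longrightarrow> unit_ty (ty_swap p q T)) \<and> (is_ty T \<longrightarrow> is_ty (ty_swap p q T))"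
  by (induction T) auto

lemma tsubst_wf: "unit_ty U \<Longrightarrow>
   (unit_ty T \<longrightarrow> unit_ty (tsubst T U X)) \<and> (is_ty T \<longrightarrow> is_ty (tsubst T U X))"
proof (induction T U X rule: tsubst.induct)
  case (3 Y T U X) thus ?case by (auto simp: Let_def swap_wf)
qed (auto simp: unit_is_ty)

lemma is_ty_tsubst: "unit_ty U \<Longrightarrow> is_ty T \<Longrightarrow> is_ty (tsubst T U X)"
  using tsubst_wf by blast
lemma unit_ty_tsubst: "unit_ty U \<Longrightarrow> unit_ty T \<Longrightarrow> unit_ty (tsubst T U X)"
  using tsubst_wf by blast

lemma alpha_teq_aux: "size A = n \<Longrightarrow> is_ty A \<Longrightarrow> is_ty B \<Longrightarrow> nf A = nf B \<Longrightarrow> teq A B"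
proof (induction n arbitrary: A B rule: less_induct)
  case (less n)
  show ?case
  proof (cases A)
    case (TVar X) thus ?thesis using less by (cases B) (auto intro: teq_refl)
  next
    case (Arr A1 A2)
    then obtain B1 B2 where B: "B = Arr B1 B2" using less by (cases B) auto
    have u: "unit_ty A1" "is_ty A2" "unit_ty B1" "is_ty B2" "nf A1 = nf B1" "nf A2 = nf B2"
      using less Arr B by auto
    have "teq A1 B1" using less(1)[OF _ refl] less(2) Arr u unit_is_ty 
    proof -
      have "size A1 < n" using less(2) Arr by simp
      thus ?thesis using less(1) u unit_is_ty by blast
    qed
    moreover have "teq A2 B2" using less(1)[OF _ refl] less(2) Arr u by simp
    ultimately show ?thesis using Arr B u by (auto intro!: teq_arr)
  next
    case (SMul c A1)
    then obtain B1 where B: "B = SMul c B1" using less by (cases B) auto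
    show ?thesis using less SMul B by (auto intro!: teq_smul)
  next
    case TZero thus ?thesis using less by (cases B) (auto intro: teq_refl)
  next
    case (All X A1)
    then obtain Y B1 where B: "B = All Y B1" using less by (cases B) auto
    define W where "W = fresh (ftv A1 \<union> ftv B1 \<union> {X, Y})"
    have "W \<notin> ftv A1 \<union> ftv B1 \<union> {X, Y}" unfolding W_def by (rule fresh_notin) simp
    hence w: "W \<notin> ftv A1" "W \<notin> ftv B1" by auto
    have c: "cl 0 X (nf A1) = cl 0 Y (nf B1)" using less(5) All B by simp
    have "cl 0 W (nf (tsubst A1 (TVar W) X)) = cl 0 W (nf (tsubst B1 (TVar W) Y))"
      using w c by (simp add: nf_tsubst cl_ds_var)
    hence e: "nf (tsubst A1 (TVar W) X) = nf (tsubst B1 (TVar W) Y)"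
      by (rule cl_inj[OF bnd_nf bnd_nf])
    have ia: "is_ty A1" "is_ty B1" using less All B by auto
    have t: "teq (tsubst A1 (TVar W) X) (tsubst B1 (TVar W) Y)"
      using less(1)[OF _ refl _ _ e] less(2) All ia by (simp add: size_tsubst_var is_ty_tsubst)
    have t1: "teq (All X A1) (All W (tsubst A1 (TVar W) X))" using w ia by (intro teq_alpha) auto
    have t2: "teq (All Y B1) (All W (tsubst B1 (TVar W) Y))" using w ia by (intro teq_alpha) auto
    show ?thesis unfolding All B
      by (rule teq_trans[OF t1 teq_trans[OF teq_all[OF t] teq_sym[OF t2]]])
  qed
qed

lemma alpha_teq: "is_ty A \<Longrightarrow> is_ty B \<Longrightarrow> nf A = nf B \<Longrightarrow> teq A B"
  using alpha_teq_aux by blast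

lemma teq_is_ty: "teq A B \<Longrightarrow> is_ty A \<and> is_ty B"
  by (induction rule: teq.induct) (auto simp: is_ty_tsubst unit_is_ty)

definition tss :: "'a ty \<Rightarrow> ('a ty \<times> tvar) list \<Rightarrow> 'a ty" where
  "tss T ps = fold (\<lambda>(U, X) S. tsubst S U X) ps T"

definition dss :: "'a dty \<Rightarrow> ('a dty \<times> nat) list \<Rightarrow> 'a dty" where
  "dss d qs = fold (\<lambda>(u, X) e. ds e u X) qs d"

definition nfps :: "('a ty \<times> tvar) list \<Rightarrow> ('a dty \<times> nat) list" where
  "nfps ps = map (\<lambda>(U, X). (nf U, X)) ps"

definition units :: "('a ty \<times> tvar) list \<Rightarrow> bool" where
  "units ps \<longleftrightarrow> (\<forall>(U, X) \<in> set ps. unit_ty U)"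

definition pv :: "('a ty \<times> tvar) list \<Rightarrow> tvar set" where
  "pv ps = (\<Union>(U, X) \<in> set ps. insert X (ftv U))"

lemma tss_Nil[simp]: "tss T [] = T" by (simp add: tss_def)
lemma tss_Cons[simp]: "tss T ((U, X) # ps) = tss (tsubst T U X) ps" by (simp add: tss_def)
lemma dss_Nil[simp]: "dss d [] = d" by (simp add: dss_def)
lemma dss_Cons[simp]: "dss d ((u, X) # qs) = dss (ds d u X) qs" by (simp add: dss_def)
lemma nfps_Nil[simp]: "nfps [] = []" by (simp add: nfps_def)
lemma nfps_Cons[simp]: "nfps ((U, X) # ps) = (nf U, X) # nfps ps" by (simp add: nfps_def)
lemma units_Nil[simp]: "units []" by (simp add: units_def)
lemma units_Cons[simp]: "units ((U, X) # ps) = (unit_ty U \<and> units ps)" by (simp add: units_def)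
lemma pv_Nil[simp]: "pv [] = {}" by (simp add: pv_def)
lemma pv_Cons[simp]: "pv ((U, X) # ps) = insert X (ftv U \<union> pv ps)" by (auto simp: pv_def)
lemma finite_pv[simp]: "finite (pv ps)" by (induction ps) auto

lemma nf_tss: "nf (tss T ps) = dss (nf T) (nfps ps)"
  by (induction ps arbitrary: T) (auto simp: nf_tsubst)

lemma tss_Arr[simp]: "tss (Arr A B) ps = Arr (tss A ps) (tss B ps)"
  by (induction ps arbitrary: A B) auto
lemma tss_SMul[simp]: "tss (SMul c A) ps = SMul c (tss A ps)"
  by (induction ps arbitrary: A) auto
lemma tss_TZero[simp]: "tss TZero ps = TZero"
  by (induction ps) auto
lemma dss_DAll[simp]: "dss (DAll e) qs = DAll (dss e qs)"
  by (induction qs arbitrary: e) auto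
lemma dss_DSM[simp]: "dss (DSM c e) qs = DSM c (dss e qs)"
  by (induction qs arbitrary: e) auto

lemma is_ty_tss: "units ps \<Longrightarrow> is_ty T \<Longrightarrow> is_ty (tss T ps)"
  by (induction ps arbitrary: T) (auto simp: is_ty_tsubst)
lemma unit_ty_tss: "units ps \<Longrightarrow> unit_ty T \<Longrightarrow> unit_ty (tss T ps)"
  by (induction ps arbitrary: T) (auto simp: unit_ty_tsubst)

lemma dfv_ds: "dfv (ds d u X) \<subseteq> (dfv d - {X}) \<union> dfv u"
  by (induction d) auto

lemma ftv_tsubst: "ftv (tsubst T U X) \<subseteq> (ftv T - {X}) \<union> ftv U"
  using dfv_ds[of "nf T" "nf U" X] by (simp add: nf_tsubst[symmetric])

lemma ftv_tss: "ftv (tss T ps) \<subseteq> ftv T \<union> pv ps"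
proof (induction ps arbitrary: T)
  case (Cons p ps)
  obtain U X where p: "p = (U, X)" by (cases p)
  show ?case using Cons[of "tsubst T U X"] ftv_tsubst[of T U X] p by auto
qed simp

lemma cl_dss: "W \<notin> pv ps \<Longrightarrow> cl k W (dss e (nfps ps)) = dss (cl k W e) (nfps ps)"
proof (induction ps arbitrary: e)
  case (Cons p ps)
  obtain U X where p: "p = (U, X)" by (cases p)
  show ?case using Cons p by (simp add: cl_ds)
qed simp

lemma K1: "W \<notin> ftv T \<Longrightarrow> W \<notin> pv ps \<Longrightarrow>
   nf (tss (All X T) ps) = nf (All W (tss T ((TVar W, X) # ps)))"
  by (simp add: nf_tss cl_dss cl_ds_var nf_tsubst)

lemma ds_ds: "W \<noteq> Y \<Longrightarrow> W \<notin> dfv u' \<Longrightarrow>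
   ds (ds e u' Y) (ds v u' Y) W = ds (ds e v W) u' Y"
  by (induction e) (auto simp: ds_triv)

lemma K2: "W \<notin> pv ps \<Longrightarrow>
   ds (dss e (nfps ps)) (dss v (nfps ps)) W = dss (ds e v W) (nfps ps)"
proof (induction ps arbitrary: e v)
  case (Cons p ps)
  obtain U X where p: "p = (U, X)" by (cases p)
  show ?case using Cons p by (simp add: ds_ds)
qed simp

lemma ds_ds_var: "W \<notin> dfv d \<Longrightarrow> ds (ds d (DF W) X) u W = ds d u X"
  by (induction d) auto

lemma K2': "W \<notin> ftv T \<Longrightarrow> W \<notin> pv ps \<Longrightarrow>
   nf (tsubst (tss T ((TVar W, X) # ps)) (tss U ps) W) = nf (tss (tsubst T U X) ps)"
  by (simp add: nf_tss nf_tsubst K2 ds_ds_var)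

lemma fresh_ex: "finite (S::nat set) \<Longrightarrow> \<exists>W. W \<notin> S"
  by (rule exI[of _ "fresh S"], rule fresh_notin)

lemma teq_alpha2: "teq A B \<Longrightarrow> is_ty A' \<Longrightarrow> is_ty B' \<Longrightarrow> nf A = nf A' \<Longrightarrow> nf B = nf B' \<Longrightarrow> teq A' B'"
  by (meson alpha_teq teq_is_ty teq_sym teq_trans)

lemma teq_tss: "teq A B \<Longrightarrow> units ps \<Longrightarrow> teq (tss A ps) (tss B ps)"
proof (induction arbitrary: ps rule: teq.induct)
  case (teq_refl T) thus ?case by (simp add: is_ty_tss teq.teq_refl)
next
  case (teq_sym T S) thus ?case by (simp add: teq.teq_sym)
next
  case (teq_trans T S R) thus ?case by (metis teq.teq_trans)
next
  case (teq_smul_zero \<alpha>) thus ?case by (simp add: teq.teq_smul_zero)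
next
  case (teq_zero_smul T) thus ?case by (simp add: is_ty_tss teq.teq_zero_smul)
next
  case (teq_one_smul T) thus ?case by (simp add: is_ty_tss teq.teq_one_smul)
next
  case (teq_smul_smul T \<alpha> \<beta>) thus ?case by (simp add: is_ty_tss teq.teq_smul_smul)
next
  case (teq_all_smul T X \<alpha>)
  obtain W where w: "W \<notin> ftv T \<union> pv ps" using fresh_ex[of "ftv T \<union> pv ps"] by auto
  define T' where "T' = tss T ((TVar W, X) # ps)"
  have it: "is_ty T'" unfolding T'_def using teq_all_smul(1,2)
    by (intro is_ty_tss) (simp_all add: is_ty_tsubst)
  have t: "teq (All W (SMul \<alpha> T')) (SMul \<alpha> (All W T'))" using it by (rule teq.teq_all_smul)
  have n1: "nf (All W (SMul \<alpha> T')) = nf (tss (All X (SMul \<alpha> T)) ps)"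
    unfolding T'_def using K1[of W "SMul \<alpha> T" ps X] w by simp
  have n2: "nf (SMul \<alpha> (All W T')) = nf (tss (SMul \<alpha> (All X T)) ps)"
    unfolding T'_def using K1[of W T ps X] w by simp
  have i1: "is_ty (tss (All X (SMul \<alpha> T)) ps)" using teq_all_smul by (intro is_ty_tss) simp_all
  have i2: "is_ty (tss (SMul \<alpha> (All X T)) ps)" using teq_all_smul by (intro is_ty_tss) simp_all
  show ?case by (rule teq_alpha2[OF t i1 i2 n1 n2])
next
  case (teq_alpha T Y X)
  have "nf (All X T) = nf (All Y (tsubst T (TVar Y) X))"
  proof (cases "Y = X")
    case True thus ?thesis by (simp add: nf_tsubst)
  next
    case False
    hence "Y \<notin> dfv (nf T)" using teq_alpha(2) by simp
    thus ?thesis by (simp add: nf_tsubst cl_ds_var)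
  qed
  hence e: "nf (tss (All X T) ps) = nf (tss (All Y (tsubst T (TVar Y) X)) ps)" by (simp add: nf_tss)
  have i1: "is_ty (tss (All X T) ps)" using teq_alpha by (intro is_ty_tss) simp_all
  have i2: "is_ty (tss (All Y (tsubst T (TVar Y) X)) ps)" using teq_alpha
    by (intro is_ty_tss) (simp_all add: is_ty_tsubst)
  show ?case by (rule alpha_teq[OF i1 i2 e])
next
  case (teq_arr U U' T T') thus ?case by (simp add: teq.teq_arr unit_ty_tss)
next
  case (teq_all T T' X)
  obtain W where w: "W \<notin> ftv T \<union> ftv T' \<union> pv ps" using fresh_ex[of "ftv T \<union> ftv T' \<union> pv ps"] by auto
  have ih: "teq (tss T ((TVar W, X) # ps)) (tss T' ((TVar W, X) # ps))"
    using teq_all(2)[of "(TVar W, X) # ps"] teq_all(3) by simp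
  have t: "teq (All W (tss T ((TVar W, X) # ps))) (All W (tss T' ((TVar W, X) # ps)))"
    using ih by (rule teq.teq_all)
  have n1: "nf (All W (tss T ((TVar W, X) # ps))) = nf (tss (All X T) ps)"
    using K1[of W T ps X] w by simp
  have n2: "nf (All W (tss T' ((TVar W, X) # ps))) = nf (tss (All X T') ps)"
    using K1[of W T' ps X] w by simp
  have ii: "is_ty T" "is_ty T'" using teq_is_ty[OF teq_all(1)] by auto
  have i1: "is_ty (tss (All X T) ps)" using ii teq_all(3) by (intro is_ty_tss) simp_all
  have i2: "is_ty (tss (All X T') ps)" using ii teq_all(3) by (intro is_ty_tss) simp_all
  show ?case by (rule teq_alpha2[OF t i1 i2 n1 n2])
next
  case (teq_smul T T' \<alpha>) thus ?case by (simp add: teq.teq_smul)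
qed

fun allv :: "'a ty \<Rightarrow> tvar set" where
  "allv (TVar X) = {X}"
| "allv (Arr U T) = allv U \<union> allv T"
| "allv (All X T) = insert X (allv T)"
| "allv (SMul \<alpha> T) = allv T"
| "allv TZero = {}"

lemma finite_allv[simp]: "finite (allv T)" by (induction T) auto

lemma tsubst_id: "W \<notin> allv A \<Longrightarrow> X \<notin> ftv A \<Longrightarrow> tsubst A (TVar W) X = A"
  by (induction A "TVar W :: 'a ty" X rule: tsubst.induct) auto

definition csub :: "'a ctx \<Rightarrow> ('a ty \<times> tvar) list \<Rightarrow> 'a ctx" where
  "csub \<Gamma> ps = (\<lambda>v. map_option (\<lambda>V. tss V ps) (\<Gamma> v))"

definition allv_ctx :: "'a ctx \<Rightarrow> tvar set" where
  "allv_ctx \<Gamma> = \<Union> (allv ` ran \<Gamma>)"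

lemma ctx_ok_fin: "ctx_ok \<Gamma> \<Longrightarrow> finite (ftv_ctx \<Gamma>) \<and> finite (allv_ctx \<Gamma>)"
  unfolding ctx_ok_def ftv_ctx_def allv_ctx_def by (auto simp: finite_ran)

lemma ctx_ok_upd: "ctx_ok \<Gamma> \<Longrightarrow> unit_ty U \<Longrightarrow> ctx_ok (\<Gamma>(x \<mapsto> U))"
  unfolding ctx_ok_def by (auto simp: ran_def)

lemma ran_upd_sub: "ran (\<Gamma>(x \<mapsto> U)) \<subseteq> insert U (ran \<Gamma>)"
  by (auto simp: ran_def)

lemma csub_upd: "csub (\<Gamma>(x \<mapsto> U)) ps = (csub \<Gamma> ps)(x \<mapsto> tss U ps)"
  by (auto simp: csub_def)

lemma csub_fresh: "X \<notin> ftv_ctx \<Gamma> \<Longrightarrow> W \<notin> allv_ctx \<Gamma> \<Longrightarrow>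
   csub \<Gamma> ((TVar W, X) # ps) = csub \<Gamma> ps"
proof
  fix v
  assume a: "X \<notin> ftv_ctx \<Gamma>" "W \<notin> allv_ctx \<Gamma>"
  show "csub \<Gamma> ((TVar W, X) # ps) v = csub \<Gamma> ps v"
  proof (cases "\<Gamma> v")
    case (Some V)
    hence "V \<in> ran \<Gamma>" by (auto simp: ran_def)
    hence "X \<notin> ftv V" "W \<notin> allv V" using a by (auto simp: ftv_ctx_def allv_ctx_def)
    thus ?thesis using Some by (simp add: csub_def tsubst_id)
  qed (simp add: csub_def)
qed

inductive htype :: "('a::comm_ring_1) ctx \<Rightarrow> 'a trm \<Rightarrow> 'a ty \<Rightarrow> nat \<Rightarrow> bool" where
  hax: "\<Gamma> x = Some U \<Longrightarrow> htype \<Gamma> (Var x) U 0"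
| hequiv: "htype \<Gamma> t T n \<Longrightarrow> teq T S \<Longrightarrow> htype \<Gamma> t S n"
| harrE: "htype \<Gamma> t (SMul \<alpha> (Arr U T)) n \<Longrightarrow> htype \<Gamma> r (SMul \<beta> U) m \<Longrightarrow>
           htype \<Gamma> (App t r) (SMul (\<alpha> * \<beta>) T) (Suc (max n m))"
| harrI: "unit_ty U \<Longrightarrow> htype (\<Gamma>(x \<mapsto> U)) t T n \<Longrightarrow> htype \<Gamma> (Lam x t) (Arr U T) (Suc n)"
| hallE: "htype \<Gamma> t (All X T) n \<Longrightarrow> unit_ty U \<Longrightarrow> htype \<Gamma> t (tsubst T U X) (Suc n)"
| hallI: "htype \<Gamma> t T n \<Longrightarrow> X \<notin> ftv_ctx \<Gamma> \<Longrightarrow> htype \<Gamma> t (All X T) (Suc n)"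
| hzero: "htype \<Gamma> Zero TZero 0"
| hplusI: "htype \<Gamma> t (SMul \<alpha> T) n \<Longrightarrow> htype \<Gamma> r (SMul \<beta> T) m \<Longrightarrow>
           htype \<Gamma> (Plus t r) (SMul (\<alpha> + \<beta>) T) (Suc (max n m))"
| hsI: "htype \<Gamma> t T n \<Longrightarrow> htype \<Gamma> (Scal \<alpha> t) (SMul \<alpha> T) (Suc n)"

lemma has_htype: "has_type \<Gamma> t T \<Longrightarrow> \<exists>n. htype \<Gamma> t T n"
  by (induction rule: has_type.induct) (blast intro: htype.intros)+

lemma htype_has: "htype \<Gamma> t T n \<Longrightarrow> has_type \<Gamma> t T"
  by (induction rule: htype.induct) (blast intro: has_type.intros)+

lemma htype_is_ty: "htype \<Gamma> t T n \<Longrightarrow> ctx_ok \<Gamma> \<Longrightarrow> is_ty T"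
proof (induction rule: htype.induct)
  case (hax \<Gamma> x U) thus ?case by (auto simp: ctx_ok_def ran_def intro: unit_is_ty)
next
  case (harrI U \<Gamma> x t T n)
  have c: "ctx_ok (\<Gamma>(x \<mapsto> U))" using harrI ctx_ok_upd by blast
  have "is_ty T" by (rule harrI.IH[OF c])
  thus ?case using harrI(1) by simp
qed (auto dest: teq_is_ty simp: is_ty_tsubst)

lemma gen: "htype \<Delta> t T n \<Longrightarrow> ctx_ok \<Delta> \<Longrightarrow> units ps \<Longrightarrow> ctx_ok D2 \<Longrightarrow>
   (\<forall>v \<in> fv t. D2 v = csub \<Delta> ps v) \<Longrightarrow> htype D2 t (tss T ps) n"
proof (induction arbitrary: ps D2 rule: htype.induct)
  case (hax \<Gamma> x U) thus ?case by (auto simp: csub_def intro: htype.hax)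
next
  case (hequiv \<Gamma> t T n S)
  have "htype D2 t (tss T ps) n" using hequiv.IH hequiv.prems by blast
  thus ?case using teq_tss[OF hequiv(2) hequiv.prems(2)] by (rule htype.hequiv)
next
  case (harrE \<Gamma> t \<alpha> U T n r \<beta> m)
  thus ?case using htype.harrE[of D2 t \<alpha> "tss U ps" "tss T ps" n r \<beta> m] by simp
next
  case (harrI U \<Gamma> x t T n)
  have o1: "ctx_ok (\<Gamma>(x \<mapsto> U))" using harrI ctx_ok_upd by blast
  have o2: "ctx_ok (D2(x \<mapsto> tss U ps))" using harrI ctx_ok_upd unit_ty_tss by blast
  have ag: "\<forall>v \<in> fv t. (D2(x \<mapsto> tss U ps)) v = csub (\<Gamma>(x \<mapsto> U)) ps v"
    unfolding csub_upd using harrI(7) by auto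
  have "htype (D2(x \<mapsto> tss U ps)) t (tss T ps) n"
    by (rule harrI.IH[OF o1 harrI(5) o2 ag])
  thus ?case using harrI by (simp add: htype.harrI unit_ty_tss)
next
  case (hallE \<Gamma> t X T n U)
  obtain W where w: "W \<notin> ftv T \<union> pv ps" using fresh_ex[of "ftv T \<union> pv ps"] by auto
  have h: "htype D2 t (tss (All X T) ps) n" using hallE by blast
  have iT: "is_ty (All X T)" using htype_is_ty[OF hallE(1,4)] .
  have h2: "htype D2 t (All W (tss T ((TVar W, X) # ps))) n"
    using h w iT hallE(5) by (intro htype.hequiv[OF h] alpha_teq) (auto simp: K1 is_ty_tss is_ty_tsubst)
  have h3: "htype D2 t (tsubst (tss T ((TVar W, X) # ps)) (tss U ps) W) (Suc n)"
    using h2 hallE by (intro htype.hallE) (auto simp: unit_ty_tss)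
  show ?case using w iT hallE
    by (intro htype.hequiv[OF h3] alpha_teq)
       (auto simp: K2' is_ty_tss is_ty_tsubst unit_ty_tss simp del: tss_Cons)
next
  case (hallI \<Gamma> t T n X)
  have "finite (ftv_ctx D2)" "finite (allv_ctx \<Gamma>)" using hallI ctx_ok_fin by auto
  hence fin: "finite (ftv T \<union> pv ps \<union> ftv_ctx D2 \<union> allv_ctx \<Gamma> \<union> {X})" by simp
  then obtain W where w: "W \<notin> ftv T \<union> pv ps \<union> ftv_ctx D2 \<union> allv_ctx \<Gamma> \<union> {X}"
    using fresh_ex[OF fin] by auto
  have c: "csub \<Gamma> ((TVar W, X) # ps) = csub \<Gamma> ps" using w hallI by (intro csub_fresh) auto
  have h: "htype D2 t (tss T ((TVar W, X) # ps)) n"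
    using hallI c by (intro hallI.IH) auto
  have h2: "htype D2 t (All W (tss T ((TVar W, X) # ps))) (Suc n)"
    using h w by (intro htype.hallI) auto
  have iT: "is_ty T" using htype_is_ty[OF hallI(1,4)] .
  show ?case using w iT hallI
    by (intro htype.hequiv[OF h2] alpha_teq)
       (auto simp: K1 is_ty_tss is_ty_tsubst simp del: tss_Cons)
next
  case (hzero \<Gamma>) thus ?case by (simp add: htype.hzero)
next
  case (hplusI \<Gamma> t \<alpha> T n r \<beta> m)
  thus ?case using htype.hplusI[of D2 t \<alpha> "tss T ps" n r \<beta> m] by simp
next
  case (hsI \<Gamma> t T n \<alpha>) thus ?case by (simp add: htype.hsI)
qed

lemma wk: "htype G1 t T n \<Longrightarrow> ctx_ok G1 \<Longrightarrow> ctx_ok G2 \<Longrightarrow> (\<forall>v \<in> fv t. G2 v = G1 v) \<Longrightarrow>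
   htype G2 t T n"
  using gen[of G1 t T n "[]" G2] by (simp add: csub_def option.map_ident)

lemma wk_has: "has_type G1 t T \<Longrightarrow> ctx_ok G1 \<Longrightarrow> ctx_ok G2 \<Longrightarrow> (\<forall>v \<in> fv t. G2 v = G1 v) \<Longrightarrow>
   has_type G2 t T"
  using has_htype wk htype_has by metis

lemma fv_swap: "fv (tm_swap y z t) = swp y z ` fv t"
  by (induction t) (auto simp: image_def swp_def)

lemma finite_fv[simp]: "finite (fv t)"
  by (induction t) auto

lemma ran_comp_swp: "ran (G \<circ> swp y z) = ran G"
  unfolding ran_def by (auto, metis swp_swp)

lemma ctx_ok_swp: "ctx_ok G \<Longrightarrow> ctx_ok (G \<circ> swp y z)"
proof -
  assume a: "ctx_ok G"
  have "dom (G \<circ> swp y z) = swp y z -` dom G" by (auto simp: dom_def)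
  moreover have "inj (swp y z)" by (rule injI) simp
  ultimately have "finite (dom (G \<circ> swp y z))" using a unfolding ctx_ok_def
    by (simp add: finite_vimageI)
  thus ?thesis using a unfolding ctx_ok_def by (simp add: ran_comp_swp)
qed

lemma upd_swp: "(G \<circ> swp y z)(swp y z x \<mapsto> U) = (G(x \<mapsto> U)) \<circ> swp y z"
  by (rule ext) (auto simp: swp_def)

lemma equivar: "htype G t T n \<Longrightarrow> htype (G \<circ> swp y z) (tm_swap y z t) T n"
proof (induction rule: htype.induct)
  case (hax G x U)
  have "(G \<circ> swp y z) (swp y z x) = Some U" using hax by simp
  thus ?case by (simp add: htype.hax)
next
  case (harrI U G x t T n)
  have "htype ((G \<circ> swp y z)(swp y z x \<mapsto> U)) (tm_swap y z t) T n"
    unfolding upd_swp by (rule harrI.IH)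
  hence "htype (G \<circ> swp y z) (Lam (swp y z x) (tm_swap y z t)) (Arr U T) (Suc n)"
    by (rule htype.harrI[OF harrI(1)])
  thus ?case by (simp add: comp_def)
next
  case (hallI G t T n X)
  from hallI.IH have a: "htype (G \<circ> swp y z) (tm_swap y z t) T n" by (simp add: comp_def)
  have b: "X \<notin> ftv_ctx (G \<circ> swp y z)" using hallI(2) by (simp add: ftv_ctx_def ran_comp_swp)
  from htype.hallI[OF a b] show ?case by (simp add: comp_def)
qed (auto intro: htype.intros)

definition Qb :: "('a::comm_ring_1) itself \<Rightarrow> nat \<Rightarrow> bool" where
  "Qb X k \<longleftrightarrow> (\<forall>m < k. \<forall>(D'::'a ctx) t' T' G x U b. htype D' t' T' m \<longrightarrow> D' = G(x \<mapsto> U) \<longrightarrow> x \<notin> dom G \<longrightarrow>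
     ctx_ok G \<longrightarrow> unit_ty U \<longrightarrow> has_type G b U \<longrightarrow> has_type G (subst t' b x) T')"

lemma Qb_mono: "Qb X k \<Longrightarrow> k' \<le> k \<Longrightarrow> Qb X k'"
  unfolding Qb_def using less_le_trans by blast

lemma sub_aux: "htype (D::('a::comm_ring_1) ctx) t T n \<Longrightarrow> Qb TYPE('a) n \<Longrightarrow>
  D = G(x \<mapsto> U) \<Longrightarrow> x \<notin> dom G \<Longrightarrow> ctx_ok G \<Longrightarrow> unit_ty U \<Longrightarrow> has_type G b U \<Longrightarrow>
  has_type G (subst t b x) T"
proof (induction arbitrary: G x U b rule: htype.induct)
  case (hax D y T)
  thus ?case by (cases "y = x") (auto intro: has_type.ax)
next
  case (hequiv D t T n S)
  have "has_type G (subst t b x) T" by (rule hequiv.IH) (use hequiv.prems in auto)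
  thus ?case using hequiv(2) by (rule has_type.equiv)
next
  case (harrE D t \<alpha> U' T n r \<beta> m)
  have "has_type G (subst t b x) (SMul \<alpha> (Arr U' T))" by (rule harrE.IH(1)) (use harrE.prems in \<open>auto intro: Qb_mono\<close>)
  moreover have "has_type G (subst r b x) (SMul \<beta> U')" by (rule harrE.IH(2)) (use harrE.prems in \<open>auto intro: Qb_mono\<close>)
  ultimately show ?case by (simp add: has_type.arrE)
next
  case (hallE D t X T n U')
  have "has_type G (subst t b x) (All X T)" by (rule hallE.IH) (use hallE.prems in \<open>auto intro: Qb_mono\<close>)
  thus ?case using hallE(2) by (rule has_type.allE)
next
  case (hallI D t T n X)
  have "has_type G (subst t b x) T" by (rule hallI.IH) (use hallI.prems in \<open>auto intro: Qb_mono\<close>)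
  moreover have "X \<notin> ftv_ctx G"
  proof -
    have "ran G \<subseteq> ran D" using hallI.prems(2,3) by (auto simp: ran_def)
    thus ?thesis using hallI(2) by (auto simp: ftv_ctx_def)
  qed
  ultimately show ?case by (rule has_type.allI)
next
  case (hzero D) thus ?case by (simp add: has_type.axZero)
next
  case (hplusI D t \<alpha> T n r \<beta> m)
  have "has_type G (subst t b x) (SMul \<alpha> T)" by (rule hplusI.IH(1)) (use hplusI.prems in \<open>auto intro: Qb_mono\<close>)
  moreover have "has_type G (subst r b x) (SMul \<beta> T)" by (rule hplusI.IH(2)) (use hplusI.prems in \<open>auto intro: Qb_mono\<close>)
  ultimately show ?case by (simp add: has_type.plusI)
next
  case (hsI D t T n \<alpha>)
  have "has_type G (subst t b x) T" by (rule hsI.IH) (use hsI.prems in \<open>auto intro: Qb_mono\<close>)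
  thus ?case by (simp add: has_type.sI)
next
  case (harrI V D y t T m)
  note P = harrI.prems
  have Q: "\<And>(D'::'a ctx) t' T' G x U b. htype D' t' T' m \<Longrightarrow> D' = G(x \<mapsto> U) \<Longrightarrow> x \<notin> dom G \<Longrightarrow>
     ctx_ok G \<Longrightarrow> unit_ty U \<Longrightarrow> has_type G b U \<Longrightarrow> has_type G (subst t' b x) T'"
    using P(1) unfolding Qb_def by blast
  have okG: "ctx_ok G" "unit_ty U" using P by auto
  show ?case
  proof (cases "y = x")
    case True
    have e: "D(y \<mapsto> V) = G(x \<mapsto> V)" using P(2) True by (auto simp: fun_upd_def)
    have "htype (G(x \<mapsto> V)) t T m" using harrI(2) unfolding e .
    hence "has_type (G(x \<mapsto> V)) t T" by (rule htype_has)
    thus ?thesis using True harrI(1) by (simp add: has_type.arrI)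
  next
    case yx: False
    show ?thesis
    proof (cases "y \<in> fv b")
      case False
      have okGy: "ctx_ok (G(y \<mapsto> V))" using okG harrI(1) ctx_ok_upd by blast
      have hb: "has_type (G(y \<mapsto> V)) b U"
        using wk_has[OF P(6) okG(1) okGy] False by auto
      have e2: "D(y \<mapsto> V) = (G(y \<mapsto> V))(x \<mapsto> U)" using P(2) yx by (auto simp: fun_upd_def)
      have h: "htype ((G(y \<mapsto> V))(x \<mapsto> U)) t T m" using harrI(2) unfolding e2 .
      have "has_type (G(y \<mapsto> V)) (subst t b x) T"
        by (rule Q[where G="G(y \<mapsto> V)" and x=x and U=U, OF h refl]) (use yx P okGy hb in auto)
      thus ?thesis using yx False harrI(1) by (simp add: has_type.arrI)
    next
      case True
      define z where "z = fresh (fv b \<union> fv t \<union> {x, y})"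
      have "z \<notin> fv b \<union> fv t \<union> {x, y}" unfolding z_def by (rule fresh_notin) simp
      hence zz: "z \<notin> fv b" "z \<notin> fv t" "z \<noteq> x" "z \<noteq> y" by auto
      have e: "subst (Lam y t) b x = Lam z (subst (tm_swap y z t) b x)"
        using yx True by (simp add: Let_def z_def)
      have ok1: "ctx_ok ((G(x \<mapsto> U))(y \<mapsto> V))" using okG harrI(1) ctx_ok_upd by blast
      have e3: "D(y \<mapsto> V) = (G(x \<mapsto> U))(y \<mapsto> V)" using P(2) by (auto simp: fun_upd_def)
      have h1: "htype ((G(x \<mapsto> U))(y \<mapsto> V) \<circ> swp y z) (tm_swap y z t) T m"
        using equivar[OF harrI(2), of y z] unfolding e3 .
      have okGz: "ctx_ok (G(z \<mapsto> V))" using okG harrI(1) ctx_ok_upd by blast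
      have ok2: "ctx_ok ((G(z \<mapsto> V))(x \<mapsto> U))" using okGz okG ctx_ok_upd by blast
      have ag: "\<forall>v \<in> fv (tm_swap y z t). ((G(z \<mapsto> V))(x \<mapsto> U)) v = ((G(x \<mapsto> U))(y \<mapsto> V) \<circ> swp y z) v"
        using zz yx unfolding fv_swap by (auto simp: swp_def)
      have h2: "htype ((G(z \<mapsto> V))(x \<mapsto> U)) (tm_swap y z t) T m"
        by (rule wk[OF h1 ctx_ok_swp[OF ok1] ok2 ag])
      have hb: "has_type (G(z \<mapsto> V)) b U"
        using wk_has[OF P(6) okG(1) okGz] zz by auto
      have "has_type (G(z \<mapsto> V)) (subst (tm_swap y z t) b x) T"
        by (rule Q[where G="G(z \<mapsto> V)" and x=x and U=U, OF h2 refl]) (use zz P okGz hb in auto)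
      thus ?thesis unfolding e using harrI(1) by (simp add: has_type.arrI)
    qed
  qed
qed

lemma part2: "has_type (G(x \<mapsto> U)) t T \<Longrightarrow> x \<notin> dom G \<Longrightarrow> ctx_ok G \<Longrightarrow> unit_ty U \<Longrightarrow>
   has_type G b U \<Longrightarrow> has_type G (subst t b x) T"
proof -
  have main: "\<And>(D::'a ctx) t T G x U b. htype D t T n \<Longrightarrow> D = G(x \<mapsto> U) \<Longrightarrow> x \<notin> dom G \<Longrightarrow>
     ctx_ok G \<Longrightarrow> unit_ty U \<Longrightarrow> has_type G b U \<Longrightarrow> has_type G (subst t b x) T" for n
  proof (induction n rule: less_induct)
    case (less n)
    have "Qb TYPE('a) n" unfolding Qb_def using less(1) by blast
    thus ?case by (rule sub_aux[OF less(2) _ less(3-7)])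
  qed
  assume "has_type (G(x \<mapsto> U)) t T" "x \<notin> dom G" "ctx_ok G" "unit_ty U" "has_type G b U"
  thus ?thesis using has_htype main by metis
qed

lemma part1: "has_type G t T \<Longrightarrow> ctx_ok G \<Longrightarrow> units ps \<Longrightarrow> has_type (csub G ps) t (tss T ps)"
proof -
  assume a: "has_type G t T" "ctx_ok G" "units ps"
  then obtain n where h: "htype G t T n" using has_htype by blast
  have "ctx_ok (csub G ps)"
  proof -
    have "dom (csub G ps) = dom G" by (auto simp: csub_def)
    moreover have "ran (csub G ps) = (\<lambda>V. tss V ps) ` ran G"
      by (auto simp: csub_def ran_def)
    ultimately show ?thesis using a unfolding ctx_ok_def by (auto simp: unit_ty_tss)
  qed
  thus ?thesis using gen[OF h a(2) a(3)] htype_has by blast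
qed

theorem mainTheorem7:
  fixes \<Gamma> :: "('a::comm_ring_1) ctx" and t b :: "'a trm" and T U :: "'a ty"
    and Us :: "'a ty list" and Xs :: "tvar list" and x :: var
  assumes "ctx_ok \<Gamma>" and "is_ty T"
  shows "(length Us = length Xs \<and> (\<forall>V \<in> set Us. unit_ty V) \<and> has_type \<Gamma> t T
           \<longrightarrow> has_type (ctx_subst \<Gamma> Us Xs) t (tsubsts T Us Xs))
       \<and> (unit_ty U \<and> x \<notin> dom \<Gamma> \<and> basis b \<and> has_type (\<Gamma>(x \<mapsto> U)) t T \<and> has_type \<Gamma> b U
           \<longrightarrow> has_type \<Gamma> (subst t b x) T)"
proof (intro conjI impI)
  assume h: "length Us = length Xs \<and> (\<forall>V \<in> set Us. unit_ty V) \<and> has_type \<Gamma> t T"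
  have u: "units (zip Us Xs)" using h unfolding units_def by (auto dest: set_zip_leftD)
  have e1: "ctx_subst \<Gamma> Us Xs = csub \<Gamma> (zip Us Xs)"
    unfolding ctx_subst_def csub_def tsubsts_def tss_def ..
  have e2: "tsubsts T Us Xs = tss T (zip Us Xs)" unfolding tsubsts_def tss_def ..
  show "has_type (ctx_subst \<Gamma> Us Xs) t (tsubsts T Us Xs)"
    unfolding e1 e2 using part1 h u assms(1) by blast
next
  assume "unit_ty U \<and> x \<notin> dom \<Gamma> \<and> basis b \<and> has_type (\<Gamma>(x \<mapsto> U)) t T \<and> has_type \<Gamma> b U"
  thus "has_type \<Gamma> (subst t b x) T" using part2 assms(1) by blast
qed

end
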